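(* Let $(X,\delta,c)$ be an accepting automaton over $\Sigma$ such that the smallest Boolean subalgebra of $P(X)$ containing $\langle c\rangle$ is $P(X)$ itself. Then $\mathsf{cofree}(X,\delta)$ can be entirely embedded in $\mu\mathrm{PL}(\delta,c)$: every language belonging to $\mathsf{cofree}(X,\delta)$ is the language $L(\mathcal{U})$ of some state $\mathcal{U}$ of $\mu\mathrm{PL}(\delta,c)$.
   Context: $\Sigma$ is a finite alphabet, $\Sigma^\ast$ the free monoid with empty word $\epsilon$, $u^r$ the reversal of $u$. An accepting automaton is $(X,\delta,c)$ with $\delta:X\to X^\Sigma$ (extended to words by $\delta(x)(\epsilon)=x$, $\delta(x)(wa)=\delta(\delta(x)(w))(a)$) and $c\subseteq X$; for $x\in X$, $U\subseteq X$, $L(x,U)=\{u\mid\delta(x)(u)\in U\}$. $\mathsf{cofree}(X,\delta)$ is the smallest set of coequations satisfied by $(X,\delta)$: the least subautomaton of the final automaton of languages ($2^{\Sigma^\ast}$ with derivative transitions $V\mapsto\{w\mid aw\in V\}$ and final states $\{V\mid\epsilon\in V\}$) containing all languages $L(x,U)$ with $x\in X$, $U\subseteq X$. Define $\widehat{\delta}(U)(a)=\{x\mid\delta(x)(a)\in U\}$ for $U\subseteq X$, extended to words, so $\widehat{\delta}(U)(w)=\{x\mid\delta(x)(w^r)\in U\}$. Let $\langle c\rangle=\{\widehat{\delta}(c)(w)\mid w\in\Sigma^\ast\}$ and $u\approx v$ iff $\widehat{\delta}(U)(u)=\widehat{\delta}(U)(v)$ for all $U\in\langle c\rangle$. $\mu\mathrm{PL}(\delta,c)$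 has state space $P(\Sigma^\ast/{\approx})$, transition $\widehat{\sigma}(\mathcal{U})(u)=\{[w]\mid[wu^r]\in\mathcal{U}\}$ and final states $\{\mathcal{U}\mid[\epsilon]\in\mathcal{U}\}$; $L(\mathcal{U})=\{u\mid[\epsilon]\in\widehat{\sigma}(\mathcal{U})(u)\}$. *)

theory Defs
  imports Main
begin

definition dstar :: "('s \<Rightarrow> 'a \<Rightarrow> 's) \<Rightarrow> 's \<Rightarrow> 'a list \<Rightarrow> 's" where
  "dstar delta x w = foldl delta x w"

definition Lang :: "('s \<Rightarrow> 'a \<Rightarrow> 's) \<Rightarrow> 's \<Rightarrow> 's set \<Rightarrow> 'a list set" where
  "Lang delta x U = {u. dstar delta x u \<in> U}"

definition lderiv :: "'a \<Rightarrow> 'a list set \<Rightarrow> 'a list set" where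
  "lderiv a V = {w. a # w \<in> V}"

text \<open>cofree(X,delta): the least subautomaton of the final automaton of languages
  containing all L(x,U).\<close>
inductive_set cofree :: "('s \<Rightarrow> 'a \<Rightarrow> 's) \<Rightarrow> 'a list set set"
  for delta :: "'s \<Rightarrow> 'a \<Rightarrow> 's" where
  gen: "Lang delta x U \<in> cofree delta"
| der: "V \<in> cofree delta \<Longrightarrow> lderiv a V \<in> cofree delta"

definition hatd :: "('s \<Rightarrow> 'a \<Rightarrow> 's) \<Rightarrow> 's set \<Rightarrow> 'a list \<Rightarrow> 's set" where
  "hatd delta U w = {x. dstar delta x (rev w) \<in> U}"

definition gen_c :: "('s \<Rightarrow> 'a \<Rightarrow> 's) \<Rightarrow> 's set \<Rightarrow> 's set set" where
  "gen_c delta c = {hatd delta c w | w. True}"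

inductive_set bool_closure :: "'s set set \<Rightarrow> 's set set" for G :: "'s set set" where
  base: "U \<in> G \<Longrightarrow> U \<in> bool_closure G"
| empty: "{} \<in> bool_closure G"
| compl: "U \<in> bool_closure G \<Longrightarrow> - U \<in> bool_closure G"
| union: "U \<in> bool_closure G \<Longrightarrow> V \<in> bool_closure G \<Longrightarrow> U \<union> V \<in> bool_closure G"

definition approx :: "('s \<Rightarrow> 'a \<Rightarrow> 's) \<Rightarrow> 's set \<Rightarrow> 'a list \<Rightarrow> 'a list \<Rightarrow> bool" where
  "approx delta c u v \<longleftrightarrow> (\<forall>U \<in> gen_c delta c. hatd delta U u = hatd delta U v)"

definition cls :: "('s \<Rightarrow> 'a \<Rightarrow> 's) \<Rightarrow> 's set \<Rightarrow> 'a list \<Rightarrow> 'a list set" where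
  "cls delta c w = {v. approx delta c w v}"

definition classes :: "('s \<Rightarrow> 'a \<Rightarrow> 's) \<Rightarrow> 's set \<Rightarrow> 'a list set set" where
  "classes delta c = range (cls delta c)"

text \<open>States of muPL(delta,c) are subsets of classes delta c.
  hat sigma(\<U>)(u) = {[w] | [w u^r] \<in> \<U>}\<close>
definition hsig :: "('s \<Rightarrow> 'a \<Rightarrow> 's) \<Rightarrow> 's set \<Rightarrow> 'a list set set \<Rightarrow> 'a list \<Rightarrow> 'a list set set" where
  "hsig delta c \<U> u = {cls delta c w | w. cls delta c (w @ rev u) \<in> \<U>}"

definition PL_lang :: "('s \<Rightarrow> 'a \<Rightarrow> 's) \<Rightarrow> 's set \<Rightarrow> 'a list set set \<Rightarrow> 'a list set" where
  "PL_lang delta c \<U> = {u. cls delta c [] \<in> hsig delta c \<U> u}"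

end

theory Submission
  imports Defs
begin

lemma dstar_append: "dstar d y (u @ v) = dstar d (dstar d y u) v"
  by (simp add: dstar_def)

lemma dstar_Cons: "dstar d y (a # u) = dstar d (d y a) u"
  by (simp add: dstar_def)

lemma approx_refl: "approx d c w w"
  by (simp add: approx_def)

lemma cls_eq_approx: "cls d c a = cls d c b \<Longrightarrow> approx d c a b"
proof -
  assume "cls d c a = cls d c b"
  then have "b \<in> cls d c a" using approx_refl[of d c b] by (simp add: cls_def)
  then show ?thesis by (simp add: cls_def)
qed

lemma bc_pre:
  assumes "U \<in> bool_closure G"
    and "\<And>V. V \<in> G \<Longrightarrow> {y. f y \<in> V} = {y. g y \<in> V}"
  shows "{y. f y \<in> U} = {y. g y \<in> U}"
  using assms(1)
proof (induction rule: bool_closure.induct)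
  case (base U) then show ?case using assms(2) by blast
next
  case empty then show ?case by simp
next
  case (compl U) then show ?case by blast
next
  case (union U V) then show ?case by blast
qed

lemma key:
  assumes bc: "bool_closure (gen_c d c) = UNIV"
    and ap: "approx d c a b"
  shows "dstar d y (rev a) = dstar d y (rev b)"
proof -
  have "\<And>V. V \<in> gen_c d c \<Longrightarrow> {y. dstar d y (rev a) \<in> V} = {y. dstar d y (rev b) \<in> V}"
    using ap by (simp add: approx_def hatd_def)
  moreover have "{dstar d y (rev a)} \<in> bool_closure (gen_c d c)" using bc by simp
  ultimately have eq: "{z. dstar d z (rev a) \<in> {dstar d y (rev a)}} = {z. dstar d z (rev b) \<in> {dstar d y (rev a)}}"
    using bc_pre[of "{dstar d y (rev a)}" "gen_c d c"] by metis
  have "y \<in> {z. dstar d z (rev a) \<in> {dstar d y (rev a)}}" by simp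
  then have "y \<in> {z. dstar d z (rev b) \<in> {dstar d y (rev a)}}" by (simp only: eq)
  then show ?thesis by simp
qed

lemma cofree_sat:
  "L \<in> cofree d \<Longrightarrow> \<forall>u v. (\<forall>y. dstar d y u = dstar d y v) \<longrightarrow> (u \<in> L \<longleftrightarrow> v \<in> L)"
proof (induction rule: cofree.induct)
  case (gen x U) then show ?case by (simp add: Lang_def)
next
  case (der V a)
  show ?case
  proof (intro allI impI)
    fix u v assume h: "\<forall>y. dstar d y u = dstar d y v"
    then have "\<forall>y. dstar d y (a # u) = dstar d y (a # v)" by (simp add: dstar_Cons)
    then show "u \<in> lderiv a V \<longleftrightarrow> v \<in> lderiv a V" using der.IH by (simp add: lderiv_def)
  qed
qed

theorem mainTheorem9:
  fixes delta :: "'s \<Rightarrow> 'a::finite \<Rightarrow> 's" and c :: "'s set"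
  assumes "bool_closure (gen_c delta c) = UNIV"
  shows "\<forall>L \<in> cofree delta. \<exists>\<U>. \<U> \<subseteq> classes delta c \<and> L = PL_lang delta c \<U>"
proof
  fix L assume L: "L \<in> cofree delta"
  note sat = cofree_sat[OF L]
  define U where "U = {cls delta c (rev u) | u. u \<in> L}"
  have "U \<subseteq> classes delta c" by (auto simp: U_def classes_def)
  moreover have "L = PL_lang delta c U"
  proof
    show "L \<subseteq> PL_lang delta c U"
    proof
      fix x assume "x \<in> L"
      then have "cls delta c ([] @ rev x) \<in> U" by (auto simp: U_def)
      then show "x \<in> PL_lang delta c U" unfolding PL_lang_def hsig_def by blast
    qed
  next
    show "PL_lang delta c U \<subseteq> L"
    proof
      fix u assume "u \<in> PL_lang delta c U"
      then obtain w where w0: "cls delta c [] = cls delta c w"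
        and e0: "cls delta c (w @ rev u) \<in> U"
        unfolding PL_lang_def hsig_def by blast
      from e0 obtain u' where e1: "cls delta c (w @ rev u) = cls delta c (rev u')" and u': "u' \<in> L"
        unfolding U_def by blast
      have w: "cls delta c w = cls delta c []" using w0 by simp
      have e: "cls delta c (w @ rev u) = cls delta c (rev u')" using e1 by simp
      have w1: "\<And>z. dstar delta z (rev w) = z"
        using key[OF assms cls_eq_approx[OF w]] by (simp add: dstar_def)
      have "\<And>y. dstar delta y (rev (w @ rev u)) = dstar delta y (rev (rev u'))"
        using key[OF assms cls_eq_approx[OF e]] by blast
      then have "\<And>y. dstar delta y u = dstar delta y u'"
        using w1 by (simp add: dstar_append)
      then show "u \<in> L" using sat u' by blast
    qed
  qed
  ultimately show "\<exists>\<U>. \<U> \<subseteq> classes delta c \<and> L = PL_lang delta c \<U>" by blast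
qed

end
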